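(* Let $\lambda=(\lambda_1,\ldots,\lambda_n)\in\mathbb{C}^n$ have pairwise distinct entries and let $\hat\lambda$ be any permutation (rearrangement) of the entries of $\lambda$. Then for all $t$, $[\nu_{0,\lambda}(t),\ldots,\nu_{n-1,\lambda}(t)]=[\nu_{0,\hat\lambda}(t),\ldots,\nu_{n-1,\hat\lambda}(t)]$.
   Context: For $\lambda\in\mathbb{C}^n$ with distinct entries, $V_\lambda$ is the $n\times n$ Vandermonde matrix with $(i,j)$ entry $\lambda_j^{i-1}$, and the Vandermonde basis functions are defined by $[\nu_{0,\lambda}(t),\ldots,\nu_{n-1,\lambda}(t)]=[e^{\lambda_1 t},\ldots,e^{\lambda_n t}]\,V_\lambda^{-1}$. *)

theory Defs
  imports "Jordan_Normal_Form.Matrix" "HOL-Library.Multiset" Complex_Main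
begin

text \<open>The vector lambda in C^n is represented as a list of length n;
  entry lambda_j (1-based) is lam ! (j-1).\<close>

definition vandermonde :: "complex list \<Rightarrow> complex mat" where
  "vandermonde lam = mat (length lam) (length lam) (\<lambda>(i, j). (lam ! j) ^ i)"

definition mat_inv :: "complex mat \<Rightarrow> complex mat" where
  "mat_inv A = (SOME B. B \<in> carrier_mat (dim_row A) (dim_row A) \<and>
                        A * B = 1\<^sub>m (dim_row A) \<and> B * A = 1\<^sub>m (dim_row A))"

definition exp_row :: "complex list \<Rightarrow> real \<Rightarrow> complex mat" where
  "exp_row lam t = mat 1 (length lam) (\<lambda>(_, j). exp ((lam ! j) * of_real t))"

definition vandermonde_basis :: "complex list \<Rightarrow> real \<Rightarrow> complex list" where
  "vandermonde_basis lam t =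
     (let M = exp_row lam t * mat_inv (vandermonde lam)
      in map (\<lambda>k. M $$ (0, k)) [0..<length lam])"

end

theory Submission
  imports Defs "HOL-Computational_Algebra.Polynomial" "HOL-Combinatorics.Permutations" "Jordan_Normal_Form.Determinant"
begin

lemma vand_det:
  assumes "distinct lam"
  shows "det (vandermonde lam) \<noteq> 0"
proof
  let ?n = "length lam"
  let ?V = "vandermonde lam"
  have V: "?V \<in> carrier_mat ?n ?n" by (simp add: vandermonde_def)
  assume "det ?V = 0"
  hence "det (transpose_mat ?V) = 0" using det_transpose[OF V] by simp
  then obtain v where v: "v \<in> carrier_vec ?n" "v \<noteq> 0\<^sub>v ?n" "transpose_mat ?V *\<^sub>v v = 0\<^sub>v ?n"
    using det_0_iff_vec_prod_zero[of "transpose_mat ?V" ?n] V by auto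
  define p where "p = (\<Sum>i<?n. monom (v $ i) i)"
  have ev: "poly p z = (\<Sum>i<?n. v $ i * z ^ i)" for z
    by (simp add: p_def poly_sum poly_monom)
  have roots: "poly p (lam ! j) = 0" if j: "j < ?n" for j
  proof -
    have "(transpose_mat ?V *\<^sub>v v) $ j = 0" using v(3) j by simp
    hence "(\<Sum>i<?n. (lam ! j) ^ i * v $ i) = 0"
      using j v(1) by (simp add: vandermonde_def scalar_prod_def row_def lessThan_atLeast0)
    thus ?thesis by (simp add: ev mult.commute)
  qed
  have "p = 0"
  proof (rule ccontr)
    assume nz: "p \<noteq> 0"
    have deg: "degree p < ?n"
    proof -
      have "?n > 0" using v(2) v(1) by (cases "?n = 0") auto
      thus ?thesis unfolding p_def
        by (intro degree_sum_less) (auto intro: le_less_trans[OF degree_monom_le])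
    qed
    have "set lam \<subseteq> {x. poly p x = 0}" using roots by (auto simp: in_set_conv_nth)
    hence "card (set lam) \<le> card {x. poly p x = 0}"
      by (intro card_mono poly_roots_finite nz) 
    also have "\<dots> \<le> degree p" by (rule card_poly_roots_bound[OF nz])
    finally show False using deg distinct_card[OF assms] by simp
  qed
  hence "v $ i = 0" if "i < ?n" for i
  proof -
    have "coeff p i = v $ i" using that by (simp add: p_def coeff_sum coeff_monom)
    thus ?thesis using \<open>p = 0\<close> by simp
  qed
  hence "v = 0\<^sub>v ?n" using v(1) by (intro eq_vecI) auto
  thus False using v(2) by simp
qed


lemma inv_unique:
  fixes A B C :: "complex mat"
  assumes "A \<in> carrier_mat n n" "B \<in> carrier_mat n n" "C \<in> carrier_mat n n"
    and "A * B = 1\<^sub>m n" "C * A = 1\<^sub>m n"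
  shows "B = C"
proof -
  have "B = (C * A) * B" using assms by simp
  also have "\<dots> = C * (A * B)" by (rule assoc_mult_mat[OF assms(3,1,2)])
  also have "\<dots> = C" using assms by simp
  finally show ?thesis .
qed

lemma mat_inv_spec:
  assumes "A \<in> carrier_mat n n" "B \<in> carrier_mat n n" "A * B = 1\<^sub>m n" "B * A = 1\<^sub>m n"
  shows "mat_inv A = B"
proof -
  have dr: "dim_row A = n" using assms by simp
  let ?P = "\<lambda>B. B \<in> carrier_mat n n \<and> A * B = 1\<^sub>m n \<and> B * A = 1\<^sub>m n"
  have "?P (SOME B. ?P B)" using assms by (intro someI[of ?P B]) auto
  hence "(SOME B. ?P B) = B" using inv_unique[of A n "SOME B. ?P B" B] assms by auto
  thus ?thesis unfolding mat_inv_def dr .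
qed

lemma vand_inv:
  assumes "distinct lam"
  obtains B where "B \<in> carrier_mat (length lam) (length lam)"
    "vandermonde lam * B = 1\<^sub>m (length lam)" "B * vandermonde lam = 1\<^sub>m (length lam)"
proof -
  let ?n = "length lam"
  have V: "vandermonde lam \<in> carrier_mat ?n ?n" by (simp add: vandermonde_def)
  have "vandermonde lam \<in> Units (ring_mat TYPE(complex) ?n undefined)"
    by (rule det_non_zero_imp_unit[OF V vand_det[OF assms]])
  thus ?thesis using that unfolding Units_def ring_mat_def by auto
qed

theorem proposition3:
  fixes lam lam' :: "complex list" and t :: real
  assumes "distinct lam"
    and "mset lam' = mset lam"
  shows "vandermonde_basis lam t = vandermonde_basis lam' t"
proof -
  let ?n = "length lam"
  obtain p where p: "p permutes {..<?n}" "permute_list p lam = lam'"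
    using mset_eq_permutation[OF assms(2)] by blast
  have len: "length lam' = ?n" using p(2) by auto
  have nth': "lam' ! j = lam ! p j" if "j < ?n" for j
    using permute_list_nth[OF p(1), of j] that by (simp add: p(2))
  have pj: "p j < ?n" if "j < ?n" for j using permutes_in_image[OF p(1)] that by simp
  have pinj: "p i = p j \<longleftrightarrow> i = j" for i j using permutes_inj[OF p(1)] by (auto dest: injD)
  define P :: "complex mat" where "P = mat ?n ?n (\<lambda>(i,j). if i = p j then 1 else 0)"
  define Q :: "complex mat" where "Q = mat ?n ?n (\<lambda>(i,j). if j = p i then 1 else 0)"
  have Pc: "P \<in> carrier_mat ?n ?n" and Qc: "Q \<in> carrier_mat ?n ?n" by (auto simp: P_def Q_def)
  let ?V = "vandermonde lam" and ?V' = "vandermonde lam'"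
  have Vc: "?V \<in> carrier_mat ?n ?n" by (simp add: vandermonde_def)
  have VP: "?V' = ?V * P"
  proof (rule eq_matI)
    fix i j assume ij: "i < dim_row (?V * P)" "j < dim_col (?V * P)"
    hence ij': "i < ?n" "j < ?n" using Vc Pc by auto
    have "(?V * P) $$ (i, j) = (\<Sum>k\<in>{0..<?n}. (lam ! k) ^ i * (if k = p j then 1 else 0))"
      using ij' by (simp add: vandermonde_def P_def scalar_prod_def)
    also have "\<dots> = (lam ! p j) ^ i" using pj[OF ij'(2)]
      by (simp add: if_distrib[of "\<lambda>x. _ * x"] sum.delta cong: if_cong)
    finally show "?V' $$ (i, j) = (?V * P) $$ (i, j)"
      using ij' by (simp add: vandermonde_def len nth')
  qed (auto simp: vandermonde_def len P_def)
  have EP: "exp_row lam' t = exp_row lam t * P"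
  proof (rule eq_matI)
    fix i j assume ij: "i < dim_row (exp_row lam t * P)" "j < dim_col (exp_row lam t * P)"
    hence ij': "i = 0" "j < ?n" by (auto simp: exp_row_def P_def)
    have "(exp_row lam t * P) $$ (i, j) = (\<Sum>k\<in>{0..<?n}. exp ((lam ! k) * of_real t) * (if k = p j then 1 else 0))"
      using ij' by (simp add: exp_row_def P_def scalar_prod_def)
    also have "\<dots> = exp ((lam ! p j) * of_real t)" using pj[OF ij'(2)]
      by (simp add: if_distrib[of "\<lambda>x. _ * x"] sum.delta cong: if_cong)
    finally show "exp_row lam' t $$ (i, j) = (exp_row lam t * P) $$ (i, j)"
      using ij' by (simp add: exp_row_def len nth')
  qed (auto simp: exp_row_def len P_def)
  have QP: "Q * P = 1\<^sub>m ?n"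
  proof (rule eq_matI)
    fix i j assume ij: "i < dim_row (1\<^sub>m ?n)" "j < dim_col (1\<^sub>m ?n)"
    hence ij': "i < ?n" "j < ?n" by auto
    have "(Q * P) $$ (i, j) = (\<Sum>k\<in>{0..<?n}. (if k = p i then 1 else 0) * (if k = p j then 1 else (0::complex)))"
      using ij' by (simp add: Q_def P_def scalar_prod_def)
    also have "\<dots> = (if p i = p j then 1 else 0)" using pj[OF ij'(1)]
      by (simp add: if_distrib[of "\<lambda>x. x * _"] sum.delta cong: if_cong)
    finally show "(Q * P) $$ (i, j) = 1\<^sub>m ?n $$ (i, j)"
      using ij' by (simp add: pinj)
  qed (auto simp: Q_def P_def)
  have PQ: "P * Q = 1\<^sub>m ?n" by (rule mat_mult_left_right_inverse[OF Qc Pc QP])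
  obtain B where B: "B \<in> carrier_mat ?n ?n" "?V * B = 1\<^sub>m ?n" "B * ?V = 1\<^sub>m ?n"
    using vand_inv[OF assms(1)] by blast
  have iV: "mat_inv ?V = B" by (rule mat_inv_spec[OF Vc B])
  have QBc: "Q * B \<in> carrier_mat ?n ?n" using Qc B by auto
  have "?V' * (Q * B) = ?V * P * (Q * B)" unfolding VP ..
  also have "\<dots> = ?V * (P * (Q * B))" by (rule assoc_mult_mat[OF Vc Pc QBc])
  also have "P * (Q * B) = (P * Q) * B" by (rule assoc_mult_mat[OF Pc Qc B(1), symmetric])
  also have "\<dots> = B" using B(1) by (simp add: PQ)
  finally have i1: "?V' * (Q * B) = 1\<^sub>m ?n" using B(2) by simp
  have "(Q * B) * ?V' = (Q * B) * (?V * P)" unfolding VP ..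
  also have "\<dots> = Q * B * ?V * P" by (rule assoc_mult_mat[OF QBc Vc Pc, symmetric])
  also have "Q * B * ?V = Q * (B * ?V)" by (rule assoc_mult_mat[OF Qc B(1) Vc])
  also have "\<dots> = Q" using Qc by (simp add: B(3))
  finally have i2: "(Q * B) * ?V' = 1\<^sub>m ?n" using QP by simp
  have V'c: "?V' \<in> carrier_mat ?n ?n" by (simp add: vandermonde_def len)
  have iV': "mat_inv ?V' = Q * B" by (rule mat_inv_spec[OF V'c QBc i1 i2])
  have Ec: "exp_row lam t \<in> carrier_mat 1 ?n" by (simp add: exp_row_def)
  have "exp_row lam' t * mat_inv ?V' = exp_row lam t * P * (Q * B)"
    unfolding EP iV' ..
  also have "\<dots> = exp_row lam t * (P * (Q * B))" by (rule assoc_mult_mat[OF Ec Pc QBc])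
  also have "P * (Q * B) = (P * Q) * B" by (rule assoc_mult_mat[OF Pc Qc B(1), symmetric])
  also have "\<dots> = B" using B(1) by (simp add: PQ)
  finally have "exp_row lam' t * mat_inv ?V' = exp_row lam t * mat_inv ?V" unfolding iV .
  thus ?thesis unfolding vandermonde_basis_def Let_def len by simp
qed

end
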